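(* Let $0<\epsilon\le 0.01$ and let $\delta>0$ be a parameter. There is an algorithm which, given $O(\delta/\epsilon^6)$ i.i.d. samples from an arbitrary unknown distribution $\mathbb{K}$ of $y\in(0,\infty)$ (i.e. a learning-to-rent problem with only one possible feature vector $x$), outputs a threshold $\theta_A$ such that, with probability at least $1-O\!\left(\frac{e^{-\Omega(\delta/\epsilon)}}{\epsilon^2}\right)$, $$\mathrm{CR}(\theta_A,\mathbb{K})\le(1+\epsilon)\inf_{\theta\ge0}\mathrm{CR}(\theta,\mathbb{K}).$$
   Context: Ski-rental setting: buying costs $1$, renting costs $1$ per unit time, season length $y>0$; a threshold strategy with threshold $\theta\ge0$ rents until time $\theta$ and then buys. Its competitive ratio on $y$ is $g(\theta,y)=\frac{1+\theta}{\min\{1,y\}}$ if $y\ge\theta$ and $g(\theta,y)=\frac{y}{\min\{1,y\}}$ otherwise. For a distribution $\mathbb{K}$ of $y$, $\mathrm{CR}(\theta,\mathbb{K})=\mathbb{E}_{y\sim\mathbb{K}}[g(\theta,y)]$. *)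

theory Defs
  imports "HOL-Probability.Probability"
begin

text \<open>Competitive ratio of threshold \<theta> on season length y.\<close>
definition g :: "real \<Rightarrow> real \<Rightarrow> real" where
  "g \<theta> y = (if y \<ge> \<theta> then (1 + \<theta>) / min 1 y else y / min 1 y)"

text \<open>Expected competitive ratio (may be infinite, hence ennreal).\<close>
definition CR :: "real \<Rightarrow> real measure \<Rightarrow> ennreal" where
  "CR \<theta> K = (\<integral>\<^sup>+ y. ennreal (g \<theta> y) \<partial>K)"

definition OPT :: "real measure \<Rightarrow> ennreal" where
  "OPT K = (INF \<theta>\<in>{0..}. CR \<theta> K)"

definition admissible :: "real measure \<Rightarrow> bool" where
  "admissible K \<longleftrightarrow> prob_space K \<and> sets K = sets borel \<and> emeasure K {0<..} = 1"

end

theory Submission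
  imports Defs
begin

lemma g_ge1: assumes "\<theta> \<ge> 0" "y > 0" shows "g \<theta> y \<ge> 1"
proof (cases "y \<ge> \<theta>")
  case True
  show ?thesis
  proof (cases "y \<le> 1")
    case True with \<open>y\<ge>\<theta>\<close> assms show ?thesis by (simp add: g_def min_def field_simps)
  next
    case False with \<open>y\<ge>\<theta>\<close> assms show ?thesis by (simp add: g_def min_def)
  qed
next
  case False then show ?thesis using assms by (auto simp: g_def min_def field_simps)
qed

lemma g_nonneg: assumes "\<theta> \<ge> 0" "y > 0" shows "g \<theta> y \<ge> 0"
  using g_ge1[OF assms] by simp

lemma le_1h: "0 \<le> h \<Longrightarrow> (a::real) \<ge> 0 \<Longrightarrow> a \<le> (1+h)*a"
  by (simp add: algebra_simps)

lemma g_bound: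
  assumes h: "0 < h" "h \<le> 1/400" and t: "h \<le> t" "t \<le> 1/h + h" and y: "y > 0"
  shows "g t y \<le> 2/h"
proof (cases "y \<ge> t")
  case True
  show ?thesis
  proof (cases "y \<le> 1")
    case y1: True
    have "t > 0" using h t by simp
    have "(1+t)/y \<le> (1+t)/t" using True y \<open>t>0\<close> by (intro divide_left_mono) auto
    also have "\<dots> = 1/t + 1" using \<open>t>0\<close> by (simp add: field_simps)
    also have "1/t \<le> 1/h" using h t by (intro divide_left_mono) auto
    also have "1/h + 1 \<le> 2/h" using h by (simp add: field_simps)
    finally show ?thesis using True y1 by (simp add: g_def min_def)
  next
    case False
    have "h*h \<le> h" using h by (simp add: mult_le_cancel_left1)
    then have "h + h*h \<le> 1" using h by linarith
    then have "1 + h \<le> 1/h" using h by (simp add: field_simps)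
    then have "1 + t \<le> 2/h" using h t by (simp add: field_simps)
    then show ?thesis using True False by (simp add: g_def min_def)
  qed
next
  case False
  have "y / min 1 y \<le> max 1 y" using y by (auto simp: min_def)
  also have "\<dots> \<le> 2/h"
  proof -
    have "h*y \<le> h*t" using False h by simp
    also have "h*t \<le> 1 + h*h" using t h by (simp add: field_simps)
    also have "h*h \<le> 1" using h by (simp add: mult_le_one)
    finally have "h*y \<le> 2" by simp
    moreover have "h \<le> 2" using h by simp
    ultimately show ?thesis using h by (simp add: field_simps)
  qed
  finally show ?thesis using False by (simp add: g_def)
qed

lemma g_grid:
  assumes h: "0 < h" "h \<le> 1" and th: "0 \<le> \<theta>" and t: "\<theta> \<le> t" "t \<le> \<theta> + h" "h \<le> t" and y: "y > 0"
  shows "g t y \<le> (1+h) * g \<theta> y"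
proof -
  have g1: "g \<theta> y \<ge> 1" using g_ge1 th y by simp
  consider "y < \<theta>" | "\<theta> \<le> y" "y < t" | "t \<le> y" by linarith
  then show ?thesis
  proof cases
    case 1 then have "g t y = g \<theta> y" using t by (simp add: g_def)
    then show ?thesis using le_1h[of h "g \<theta> y"] g1 h by simp
  next
    case 2
    show ?thesis
    proof (cases "y \<le> 1")
      case True
      then have "g t y = 1" using 2 y by (simp add: g_def min_def)
      then show ?thesis using le_1h[of h "g \<theta> y"] g1 h by linarith
    next
      case False
      then have e: "g t y = y" "g \<theta> y = 1 + \<theta>" using 2 y by (auto simp: g_def min_def)
      moreover have "\<theta> * h \<ge> 0" using h th by simp
      moreover have "(1+h)*(1+\<theta>) = 1+\<theta>+h+\<theta>*h" by (simp add: algebra_simps)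
      ultimately have "y \<le> (1+h)*(1+\<theta>)" using 2 t h th by linarith
      then show ?thesis using e by simp
    qed
  next
    case 3
    then have "g t y = (1+t)/min 1 y" "g \<theta> y = (1+\<theta>)/min 1 y" using t by (auto simp: g_def)
    moreover have "1 + t \<le> (1+h)*(1+\<theta>)"
    proof -
      have "\<theta>*h \<ge> 0" using h th by simp
      moreover have "(1+h)*(1+\<theta>) = 1+\<theta>+h+\<theta>*h" by (simp add: algebra_simps)
      ultimately show ?thesis using t h by linarith
    qed
    ultimately show ?thesis using y by (simp add: divide_right_mono)
  qed
qed

lemma g_grid_top:
  assumes h: "0 < h" "h \<le> 1" and T: "1/h \<le> T" and th: "T < \<theta>" and y: "y > 0"
  shows "g T y \<le> (1+h) * g \<theta> y"
proof -
  have "1 \<le> 1/h" using h by simp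
  then have T1: "T \<ge> 1" using T by linarith
  have g1: "g \<theta> y \<ge> 1" using g_ge1 th y T1 by simp
  consider "y < T" | "T \<le> y" "y < \<theta>" | "\<theta> \<le> y" by linarith
  then show ?thesis
  proof cases
    case 1 then have "g T y = g \<theta> y" using th by (simp add: g_def)
    then show ?thesis using le_1h[of h "g \<theta> y"] g1 h by simp
  next
    case 2
    then have "g T y = 1 + T" "g \<theta> y = y" using T1 y by (auto simp: g_def min_def)
    moreover have "1 \<le> h * T" using T h by (simp add: field_simps)
    moreover have "h*T \<le> h*y" using 2 h by simp
    ultimately show ?thesis using 2 by (simp add: algebra_simps)
  next
    case 3
    then have "g T y = (1+T)/min 1 y" "g \<theta> y = (1+\<theta>)/min 1 y" using th by (auto simp: g_def)
    moreover have "1 + T \<le> (1+h)*(1+\<theta>)" proof -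
      have "\<theta>*h \<ge> 0" using h th T1 by simp
      then show ?thesis using th h by (simp add: algebra_simps)
    qed
    ultimately show ?thesis using y by (simp add: divide_right_mono)
  qed
qed

lemma adm_prob: "admissible K \<Longrightarrow> prob_space K" by (simp add: admissible_def)

lemma adm_AE: assumes "admissible K" shows "AE y in K. y > 0"
proof -
  interpret prob_space K using assms by (simp add: admissible_def)
  have "prob {0<..} = 1" using assms by (simp add: admissible_def emeasure_eq_measure)
  from AE_prob_1[OF this] show ?thesis by simp
qed

lemma g_meas_borel[measurable]: "g t \<in> borel_measurable borel"
  unfolding g_def by measurable

lemma g_meas: assumes "admissible K" shows "g t \<in> borel_measurable K"
proof -
  have "sets K = sets borel" using assms by (simp add: admissible_def)
  then show ?thesis using measurable_cong_sets[of K borel borel borel] by simp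
qed

lemma CR_ge1: assumes "admissible K" "\<theta> \<ge> 0" shows "CR \<theta> K \<ge> 1"
proof -
  interpret prob_space K using assms by (simp add: admissible_def)
  have "(\<integral>\<^sup>+ y. 1 \<partial>K) \<le> (\<integral>\<^sup>+ y. ennreal (g \<theta> y) \<partial>K)"
    using adm_AE[OF assms(1)] by (intro nn_integral_mono_AE) (auto elim!: eventually_mono intro: g_ge1 assms)
  then show ?thesis by (simp add: CR_def emeasure_space_1)
qed

lemma CR_real:
  assumes K: "admissible K" and h: "0 < h" "h \<le> 1/400" and t: "h \<le> t" "t \<le> 1/h + h"
  shows "integrable K (g t)" "CR t K = ennreal (\<integral>y. g t y \<partial>K)"
proof -
  interpret prob_space K using K by (simp add: admissible_def)
  have ae: "AE y in K. norm (g t y) \<le> 2/h"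
    using adm_AE[OF K] apply (rule eventually_mono)
    using g_bound[OF h t] g_nonneg[of t] h t by auto
  show int: "integrable K (g t)"
    by (rule integrable_const_bound[OF ae g_meas[OF K]])
  show "CR t K = ennreal (\<integral>y. g t y \<partial>K)"
    unfolding CR_def
    by (rule nn_integral_eq_integral[OF int]) (use adm_AE[OF K] h t in \<open>auto elim!: eventually_mono intro: g_nonneg\<close>)
qed

lemma indep_coords:
  assumes K: "admissible K" and n: "n > 0"
  shows "prob_space.indep_vars (PiM {..<n} (\<lambda>_. K)) (\<lambda>_. K) (\<lambda>i S. S i) {..<n}"
proof -
  have pK: "prob_space K" using K by (simp add: admissible_def)
  interpret M: prob_space "PiM {..<n} (\<lambda>_. K)" by (rule prob_space_PiM) (use pK in auto)
  have ne: "{..<n} \<noteq> {}" using n by auto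
  show ?thesis
  proof (subst M.indep_vars_iff_distr_eq_PiM'[OF ne])
    show "(\<lambda>S. S i) \<in> measurable (PiM {..<n} (\<lambda>_. K)) K" if "i \<in> {..<n}" for i using that by (intro measurable_component_singleton) simp
    have "distr (PiM {..<n} (\<lambda>_. K)) (PiM {..<n} (\<lambda>_. K)) (\<lambda>x. \<lambda>i\<in>{..<n}. x i)
        = distr (PiM {..<n} (\<lambda>_. K)) (PiM {..<n} (\<lambda>_. K)) (\<lambda>x. x)"
      by (rule distr_cong) (auto simp: space_PiM PiE_def extensional_def restrict_def fun_eq_iff)
    also have "\<dots> = PiM {..<n} (\<lambda>_. K)" by simp
    also have "\<dots> = PiM {..<n} (\<lambda>i. distr (PiM {..<n} (\<lambda>_. K)) K (\<lambda>S. S i))"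
    proof (rule PiM_cong)
      fix i assume "i \<in> {..<n}"
      then show "K = distr (PiM {..<n} (\<lambda>_. K)) K (\<lambda>S. S i)"
        using distr_PiM_component[of "{..<n}" "\<lambda>_. K" i] pK by simp
    qed simp
    finally show "distr (PiM {..<n} (\<lambda>_. K)) (PiM {..<n} (\<lambda>_. K)) (\<lambda>x. \<lambda>i\<in>{..<n}. x i)
        = PiM {..<n} (\<lambda>i. distr (PiM {..<n} (\<lambda>_. K)) K (\<lambda>S. S i))" .
  qed
qed

lemma hoeff:
  assumes K: "admissible K" and n: "n > 0" and h: "0 < h" "h \<le> 1/400"
    and t: "h \<le> t" "t \<le> 1/h + h" and eta: "\<eta> \<ge> 0"
  shows "measure (PiM {..<n} (\<lambda>_. K))
     {S \<in> space (PiM {..<n} (\<lambda>_. K)). \<bar>(\<Sum>i\<in>{..<n}. g t (S i)) / real n - (\<integral>y. g t y \<partial>K)\<bar> \<ge> \<eta>}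
     \<le> 2 * exp (-2 * real n * \<eta>\<^sup>2 / (2/h - 0)\<^sup>2)"
proof -
  let ?M = "PiM {..<n} (\<lambda>_. K)"
  have pK: "prob_space K" using K by (simp add: admissible_def)
  interpret M: prob_space ?M by (rule prob_space_PiM) (use pK in auto)
  have gK[measurable]: "g t \<in> borel_measurable K" by (rule g_meas[OF K])
  have comp: "(\<lambda>S. S i) \<in> measurable ?M K" if "i < n" for i
    using that by (intro measurable_component_singleton) simp
  have dK: "distr ?M K (\<lambda>S. S i) = K" if "i < n" for i
    using distr_PiM_component[of "{..<n}" "\<lambda>_. K" i] pK that by simp
  have dist: "distr ?M borel (\<lambda>S. g t (S i)) = distr K borel (g t)" if "i < n" for i
  proof -
    have "distr ?M borel (\<lambda>S. g t (S i)) = distr (distr ?M K (\<lambda>S. S i)) borel (g t)"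
      by (subst distr_distr[OF gK comp[OF that]]) (simp add: comp_def)
    then show ?thesis using dK[OF that] by simp
  qed
  have mX: "(\<lambda>S. g t (S i)) \<in> borel_measurable ?M" if "i < n" for i
    using measurable_comp[OF comp[OF that] gK] by (simp add: comp_def)
  have ind: "M.indep_vars (\<lambda>_. borel) (\<lambda>i S. g t (S i)) {..<n}"
    by (rule M.indep_vars_compose2[OF indep_coords[OF K n]]) (rule gK)
  have ae: "AE S in ?M. g t (S 0) \<in> {0..2/h}"
  proof (rule AE_PiM_component)
    show "AE y in K. g t y \<in> {0..2/h}"
      using adm_AE[OF K] by (rule eventually_mono) (use g_bound[OF h t] g_nonneg[of t] h t in auto)
  qed (use pK n in auto)
  have ex: "(\<integral>y. g t y \<partial>K) = M.expectation (\<lambda>S. g t (S 0))"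
  proof -
    have "M.expectation (\<lambda>S. g t (S 0)) = integral\<^sup>L (distr ?M K (\<lambda>S. S 0)) (g t)"
      by (subst integral_distr[OF comp[OF n] gK]) (simp add: comp_def)
    then show ?thesis using dK[OF n] by simp
  qed
  interpret H: Hoeffding_ineq_iid ?M "{..<n}" "\<lambda>i S. g t (S i)" "\<lambda>S. g t (S 0)" 0 "2/h" "\<integral>y. g t y \<partial>K"
  proof unfold_locales
    show "M.indep_vars (\<lambda>_. borel) (\<lambda>i S. g t (S i)) {..<n}" by (rule ind)
    show "distr ?M borel (\<lambda>S. g t (S i)) = distr ?M borel (\<lambda>S. g t (S 0))" if "i \<in> {..<n}" for i
      using dist[of i] dist[OF n] that by simp
    show "(\<lambda>S. g t (S 0)) \<in> borel_measurable ?M" by (rule mX[OF n])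
    show "AE S in ?M. g t (S 0) \<in> {0..2/h}" by (rule ae)
    show "(\<integral>y. g t y \<partial>K) \<equiv> M.expectation (\<lambda>S. g t (S 0))" using ex by simp
  qed simp
  have pos: "0 < 2/h" using h by simp
  have ne: "{..<n} \<noteq> {}" using n by auto
  from H.Hoeffding_ineq_abs_ge'[OF eta pos ne] show ?thesis by simp
qed

lemma CR_mono_pt:
  assumes K: "admissible K" and c: "c \<ge> 0" and pt: "\<And>y. y > 0 \<Longrightarrow> g t y \<le> c * g \<theta> y"
    and th: "\<theta> \<ge> 0"
  shows "CR t K \<le> ennreal c * CR \<theta> K"
proof -
  have "CR t K \<le> (\<integral>\<^sup>+ y. ennreal c * ennreal (g \<theta> y) \<partial>K)"
    unfolding CR_def
  proof (rule nn_integral_mono_AE)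
    show "AE y in K. ennreal (g t y) \<le> ennreal c * ennreal (g \<theta> y)"
      using adm_AE[OF K] proof (rule eventually_mono)
      fix y :: real assume y: "y > 0"
      have "ennreal (g t y) \<le> ennreal (c * g \<theta> y)" using pt[OF y] by (rule ennreal_leI)
      also have "\<dots> = ennreal c * ennreal (g \<theta> y)" using c g_nonneg[OF th y] by (simp add: ennreal_mult)
      finally show "ennreal (g t y) \<le> ennreal c * ennreal (g \<theta> y)" .
    qed
  qed
  also have "\<dots> = ennreal c * CR \<theta> K"
    unfolding CR_def by (rule nn_integral_cmult) (use g_meas[OF K] in simp)
  finally show ?thesis .
qed

lemma grid_exists:
  assumes K: "admissible K" and h: "0 < h" "h \<le> 1/400" and N: "N \<ge> 1" "1/h \<le> h * real N"
    and th: "\<theta> \<ge> 0"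
  shows "\<exists>j\<in>{1..N}. CR (h * real j) K \<le> ennreal (1+h) * CR \<theta> K"
proof (cases "\<theta> \<le> h * real N")
  case True
  define j where "j = max 1 (nat \<lceil>\<theta>/h\<rceil>)"
  have c1: "\<theta>/h \<le> real (nat \<lceil>\<theta>/h\<rceil>)" by linarith
  have c2: "real (nat \<lceil>\<theta>/h\<rceil>) < \<theta>/h + 1"
  proof -
    have "0 \<le> \<theta>/h" using th h by simp
    then have "real (nat \<lceil>\<theta>/h\<rceil>) = real_of_int \<lceil>\<theta>/h\<rceil>" by simp
    then show ?thesis using ceiling_correct[of "\<theta>/h"] by linarith
  qed
  have "\<theta>/h \<le> real N" using True h by (simp add: field_simps)
  then have "nat \<lceil>\<theta>/h\<rceil> \<le> N" by (simp add: nat_le_iff ceiling_le_iff)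
  then have jN: "j \<in> {1..N}" using N by (simp add: j_def)
  have t1: "\<theta> \<le> h * real j"
  proof -
    have "\<theta> \<le> h * real (nat \<lceil>\<theta>/h\<rceil>)" using c1 h by (simp add: field_simps)
    also have "\<dots> \<le> h * real j" using h by (simp add: j_def)
    finally show ?thesis .
  qed
  have t2: "h * real j \<le> \<theta> + h"
  proof (cases "nat \<lceil>\<theta>/h\<rceil> \<ge> 1")
    case True
    then have "j = nat \<lceil>\<theta>/h\<rceil>" by (simp add: j_def)
    then have "real j \<le> \<theta>/h + 1" using c2 by simp
    then have "h * real j \<le> h * (\<theta>/h + 1)" using h by (simp add: mult_left_mono)
    moreover have "h * (\<theta>/h + 1) = \<theta> + h" using h by (simp add: field_simps)
    ultimately show ?thesis by linarith
  next
    case False then have "j = 1" by (simp add: j_def)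
    then show ?thesis using th by simp
  qed
  have t3: "h \<le> h * real j" using jN h by simp
  have "CR (h * real j) K \<le> ennreal (1+h) * CR \<theta> K"
    by (rule CR_mono_pt[OF K _ _ th]) (use h in simp, rule g_grid[OF _ _ th t1 t2 t3], use h in auto)
  then show ?thesis using jN by blast
next
  case False
  have "CR (h * real N) K \<le> ennreal (1+h) * CR \<theta> K"
    by (rule CR_mono_pt[OF K _ _ th]) (use h in simp, rule g_grid_top[OF _ _ N(2)], use h False in auto)
  then show ?thesis using N by auto
qed

lemma det:
  assumes K: "admissible K" and e: "0 < \<epsilon>" "\<epsilon> \<le> 1/100" and hdef: "h = \<epsilon>/4"
    and N: "N \<ge> 1" "1/h \<le> h * real N" "h * real N \<le> 1/h + h"
    and k0: "k0 \<in> {1..N}"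
    and opt: "\<forall>j\<in>{1..N}. (\<integral>y. g (h*real k0) y \<partial>K) \<le> (\<integral>y. g (h*real j) y \<partial>K) + \<epsilon>/4"
  shows "CR (h * real k0) K \<le> ennreal (1+\<epsilon>) * OPT K"
proof -
  have h: "0 < h" "h \<le> 1/400" using e hdef by auto
  have tb: "h \<le> h * real k" "h * real k \<le> 1/h + h" if "k \<in> {1..N}" for k
  proof -
    show "h \<le> h * real k" using that h by simp
    have "h * real k \<le> h * real N" using that h by simp
    then show "h * real k \<le> 1/h + h" using N by linarith
  qed
  define \<mu> where "\<mu> k = (\<integral>y. g (h*real k) y \<partial>K)" for k
  have CRk: "CR (h * real k) K = ennreal (\<mu> k)" if "k \<in> {1..N}" for k
    unfolding \<mu>_def by (rule CR_real(2)[OF K h tb[OF that]])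
  define r where "r = \<mu> k0 / (1+\<epsilon>)"
  have rle: "ennreal r \<le> CR \<theta> K" if th: "\<theta> \<in> {0..}" for \<theta>
  proof (cases "CR \<theta> K = \<top>")
    case True then show ?thesis by simp
  next
    case False
    then obtain c where c: "CR \<theta> K = ennreal c" "c \<ge> 0" by (cases "CR \<theta> K") auto
    have "1 \<le> CR \<theta> K" using CR_ge1[OF K] th by simp
    then have c1: "c \<ge> 1" using c by simp
    have "\<exists>j\<in>{1..N}. CR (h * real j) K \<le> ennreal (1+h) * CR \<theta> K"
      by (rule grid_exists[OF K h N(1) N(2)]) (use th in simp)
    then obtain j where j: "j \<in> {1..N}" and jle: "CR (h * real j) K \<le> ennreal (1+h) * CR \<theta> K"
      by blast
    have "ennreal (\<mu> j) \<le> ennreal ((1+h) * c)"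
      using jle CRk[OF j] c h by (simp add: ennreal_mult)
    then have mj: "\<mu> j \<le> (1+h) * c" using c h by (simp add: ennreal_le_iff)
    have "\<mu> k0 \<le> \<mu> j + \<epsilon>/4" using opt j unfolding \<mu>_def by blast
    also have "\<dots> \<le> (1+\<epsilon>) * c"
    proof -
      have "\<epsilon>/4 \<le> \<epsilon>/4 * c" using c1 e by simp
      moreover have "(1+\<epsilon>)*c = c + \<epsilon>/4 * c + \<epsilon>/4*c + \<epsilon>/2*c" by (simp add: algebra_simps)
      moreover have "(1+h)*c = c + \<epsilon>/4*c" using hdef by (simp add: algebra_simps)
      moreover have "\<epsilon>/2*c \<ge> 0" using e c by simp
      ultimately show ?thesis using mj by linarith
    qed
    finally have "r \<le> c" unfolding r_def using e by (simp add: field_simps)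
    then show ?thesis using c by simp
  qed
  then have "ennreal r \<le> OPT K" unfolding OPT_def by (rule INF_greatest)
  then have "ennreal (1+\<epsilon>) * ennreal r \<le> ennreal (1+\<epsilon>) * OPT K" by (rule mult_left_mono) simp
  moreover have "ennreal (1+\<epsilon>) * ennreal r = ennreal (\<mu> k0)"
  proof -
    have "\<mu> k0 \<ge> 0"
      unfolding \<mu>_def using adm_AE[OF K] tb[OF k0] h
      by (intro integral_nonneg_AE) (auto elim!: eventually_mono intro: g_nonneg)
    then have "r \<ge> 0" using e by (simp add: r_def)
    then have "ennreal (1+\<epsilon>) * ennreal r = ennreal ((1+\<epsilon>) * r)"
      by (intro ennreal_mult[symmetric]) (use e in auto)
    also have "(1+\<epsilon>) * r = \<mu> k0" using e by (simp add: r_def)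
    finally show ?thesis .
  qed
  ultimately show ?thesis using CRk[OF k0] by simp
qed

definition emp :: "nat \<Rightarrow> real \<Rightarrow> (nat \<Rightarrow> real) \<Rightarrow> real" where
  "emp n t S = (\<Sum>i\<in>{..<n}. g t (S i)) / real n"

definition Lsel :: "real \<Rightarrow> nat \<Rightarrow> nat \<Rightarrow> (nat \<Rightarrow> real) \<Rightarrow> nat" where
  "Lsel h N n S = (LEAST k. k \<in> {1..N} \<and> (\<forall>j\<in>{1..N}. emp n (h*real k) S \<le> emp n (h*real j) S))"

lemma Lsel_meas:
  assumes gm: "\<And>t. g t \<in> borel_measurable M'"
  shows "Lsel h N n \<in> measurable (PiM {..<n} (\<lambda>_. M')) (count_space UNIV)"
proof -
  have [measurable]: "g t \<in> borel_measurable M'" for t by (rule gm)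
  have [measurable]: "(\<lambda>S. emp n t S) \<in> borel_measurable (PiM {..<n} (\<lambda>_. M'))" for t
    unfolding emp_def by measurable
  have [measurable]: "Measurable.pred (PiM {..<n} (\<lambda>_. M')) (\<lambda>S. emp n a S \<le> emp n b S)" for a b
    unfolding Measurable.pred_def by (rule borel_measurable_le) simp_all
  show ?thesis unfolding Lsel_def by measurable
qed

lemma Lsel_prop:
  assumes "N \<ge> 1"
  shows "Lsel h N n S \<in> {1..N} \<and> (\<forall>j\<in>{1..N}. emp n (h*real (Lsel h N n S)) S \<le> emp n (h*real j) S)"
proof -
  let ?f = "\<lambda>k. emp n (h*real k) S"
  have fin: "finite (?f ` {1..N})" "?f ` {1..N} \<noteq> {}" using assms by auto
  obtain k where k: "k \<in> {1..N}" "?f k = Min (?f ` {1..N})" using Min_in[OF fin] by auto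
  have "k \<in> {1..N} \<and> (\<forall>j\<in>{1..N}. ?f k \<le> ?f j)" using k fin by auto
  then show ?thesis unfolding Lsel_def by (rule LeastI)
qed

lemma numeric0:
  fixes \<epsilon> \<delta> :: real
  assumes e: "0 < \<epsilon>" "\<epsilon> \<le> 1/100" and d: "0 < \<delta>" "\<delta> / \<epsilon>^6 < 1"
  shows "1 - 200 * exp (- (1/2048) * \<delta> / \<epsilon>) / \<epsilon>^2 \<le> 0"
proof -
  have "\<delta> < \<epsilon>^6" using d e by (simp add: field_simps)
  also have "\<epsilon>^6 \<le> \<epsilon>" using e power_decreasing[of 1 6 \<epsilon>] by simp
  finally have "\<delta> / \<epsilon> < 1" using e by (simp add: field_simps)
  then have x: "(1/2048) * \<delta> / \<epsilon> \<le> 1/2" using d e by (simp add: field_simps)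
  have "1 - (1/2048) * \<delta> / \<epsilon> \<le> exp (- (1/2048) * \<delta> / \<epsilon>)"
    using exp_ge_add_one_self[of "- (1/2048) * \<delta> / \<epsilon>"] by simp
  then have "1/2 \<le> exp (- (1/2048) * \<delta> / \<epsilon>)" using x by linarith
  moreover have "\<epsilon>^2 \<le> 1" using e by (simp add: power_le_one)
  moreover have "\<epsilon>^2 > 0" using e by simp
  ultimately have "1 \<le> 200 * exp (- (1/2048) * \<delta> / \<epsilon>) / \<epsilon>^2"
    by (simp add: field_simps)
  then show ?thesis by simp
qed

lemma numeric1:
  fixes \<epsilon> \<delta> h :: real
  assumes e: "0 < \<epsilon>" "\<epsilon> \<le> 1/100" and d: "0 < \<delta>" and h: "h = \<epsilon>/4"
    and N: "real N < 1/h^2 + 1" and n: "real n > \<delta> / \<epsilon>^6 - 1"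
  shows "real N * (2 * exp (-2 * real n * (\<epsilon>/8)\<^sup>2 / (2/h - 0)\<^sup>2))
    \<le> 200 * exp (- (1/2048) * \<delta> / \<epsilon>) / \<epsilon>^2"
proof -
  have ex: "-2 * real n * (\<epsilon>/8)\<^sup>2 / (2/h - 0)\<^sup>2 = - (real n * \<epsilon>^4 / 2048)"
    using e unfolding h by (simp add: field_simps power2_eq_square power4_eq_xxxx)
  have "real n * \<epsilon>^4 > (\<delta> / \<epsilon>^6 - 1) * \<epsilon>^4" using n e by simp
  also have "(\<delta> / \<epsilon>^6 - 1) * \<epsilon>^4 = \<delta> / \<epsilon>^2 - \<epsilon>^4" using e by (simp add: field_simps eval_nat_numeral)
  finally have a: "real n * \<epsilon>^4 > \<delta> / \<epsilon>^2 - \<epsilon>^4" .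
  have "\<delta> / \<epsilon> \<le> \<delta> / \<epsilon>^2"
  proof -
    have "\<epsilon>^2 \<le> \<epsilon>" using e by (simp add: power2_eq_square mult_le_cancel_left1)
    then show ?thesis using e d by (intro divide_left_mono) auto
  qed
  moreover have "\<epsilon>^4 \<le> 1" using e by (simp add: power_le_one)
  ultimately have b: "real n * \<epsilon>^4 / 2048 \<ge> (1/2048) * \<delta> / \<epsilon> - 1" using a by simp
  have "exp (- (real n * \<epsilon>^4 / 2048)) \<le> exp (1 + (- (1/2048) * \<delta> / \<epsilon>))"
    using b by simp
  also have "\<dots> = exp 1 * exp (- (1/2048) * \<delta> / \<epsilon>)" by (rule exp_add)
  also have "\<dots> \<le> 3 * exp (- (1/2048) * \<delta> / \<epsilon>)" using exp_le by simp
  finally have E: "exp (- (real n * \<epsilon>^4 / 2048)) \<le> 3 * exp (- (1/2048) * \<delta> / \<epsilon>)" .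
  have "1/h^2 = 16/\<epsilon>^2" unfolding h by (simp add: power2_eq_square)
  moreover have "1 \<le> 1/\<epsilon>^2" using e by (simp add: power_le_one field_simps)
  ultimately have N': "real N \<le> 17/\<epsilon>^2" using N by simp
  have "real N * (2 * exp (- (real n * \<epsilon>^4 / 2048))) \<le> 17/\<epsilon>^2 * (2 * (3 * exp (- (1/2048) * \<delta> / \<epsilon>)))"
    by (intro mult_mono N' mult_left_mono E) auto
  also have "\<dots> = 102 * exp (- (1/2048) * \<delta> / \<epsilon>) / \<epsilon>^2" by simp
  also have "\<dots> \<le> 200 * exp (- (1/2048) * \<delta> / \<epsilon>) / \<epsilon>^2"
    by (intro divide_right_mono mult_right_mono) auto
  finally show ?thesis by (simp only: ex)
qed

lemma main_fixed:
  fixes \<epsilon> \<delta> :: real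
  assumes e: "0 < \<epsilon>" "\<epsilon> \<le> 1/100" and d: "0 < \<delta>"
  shows "\<exists>(n::nat) (A :: (nat \<Rightarrow> real) \<Rightarrow> real).
       real n \<le> 1 * \<delta> / \<epsilon> ^ 6 \<and>
       A \<in> borel_measurable (PiM {..<n} (\<lambda>_. borel)) \<and>
       (\<forall>S. A S \<ge> 0) \<and>
       (\<forall>K. admissible K \<longrightarrow>
          measure (PiM {..<n} (\<lambda>_. K))
            {S \<in> space (PiM {..<n} (\<lambda>_. K)). CR (A S) K \<le> ennreal (1 + \<epsilon>) * OPT K}
          \<ge> 1 - 200 * exp (- (1/2048) * \<delta> / \<epsilon>) / \<epsilon> ^ 2)"
proof -
  define h where "h = \<epsilon>/4"
  have h: "0 < h" "h \<le> 1/400" using e by (auto simp: h_def)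
  define N where "N = nat \<lceil>1/h^2\<rceil>"
  have hpos: "1/h^2 > 0" using h by simp
  have N1: "real N \<ge> 1/h^2" unfolding N_def using hpos by linarith
  have N2: "real N < 1/h^2 + 1" unfolding N_def using hpos ceiling_correct[of "1/h^2"] by linarith
  have Nge: "N \<ge> 1" unfolding N_def using hpos by linarith
  have NT1: "1/h \<le> h * real N"
  proof -
    have "h * (1/h^2) \<le> h * real N" by (rule mult_left_mono[OF N1]) (use h in simp)
    moreover have "h * (1/h^2) = 1/h" using h by (simp add: power2_eq_square)
    ultimately show ?thesis by simp
  qed
  have NT2: "h * real N \<le> 1/h + h"
  proof -
    have "h * real N \<le> h * (1/h^2 + 1)" by (rule mult_left_mono) (use N2 h in simp_all)
    moreover have "h * (1/h^2 + 1) = 1/h + h" using h by (simp add: power2_eq_square field_simps)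
    ultimately show ?thesis by simp
  qed
  define n where "n = nat \<lfloor>\<delta> / \<epsilon>^6\<rfloor>"
  have dpos: "\<delta> / \<epsilon>^6 > 0" using d e by simp
  have n1: "real n \<le> \<delta> / \<epsilon>^6" unfolding n_def using dpos by linarith
  have n2: "real n > \<delta> / \<epsilon>^6 - 1" unfolding n_def using dpos by linarith
  define A where "A S = h * real (Lsel h N n S)" for S
  have Ameas: "A \<in> borel_measurable (PiM {..<n} (\<lambda>_. borel))"
  proof -
    have L[measurable]: "Lsel h N n \<in> measurable (PiM {..<n} (\<lambda>_. borel)) (count_space UNIV)"
      by (rule Lsel_meas) simp
    show ?thesis unfolding A_def by measurable
  qed
  have Apos: "\<forall>S. A S \<ge> 0" using h by (simp add: A_def)
  have bound: "measure (PiM {..<n} (\<lambda>_. K))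
            {S \<in> space (PiM {..<n} (\<lambda>_. K)). CR (A S) K \<le> ennreal (1 + \<epsilon>) * OPT K}
          \<ge> 1 - 200 * exp (- (1/2048) * \<delta> / \<epsilon>) / \<epsilon> ^ 2" if K: "admissible K" for K
  proof (cases "n = 0")
    case True
    then have "\<delta> / \<epsilon>^6 < 1" using n2 by simp
    from numeric0[OF e d this] show ?thesis
      using measure_nonneg[of "PiM {..<n} (\<lambda>_. K)" "{S \<in> space (PiM {..<n} (\<lambda>_. K)). CR (A S) K \<le> ennreal (1 + \<epsilon>) * OPT K}"]
      by linarith
  next
    case False
    then have n0: "n > 0" by simp
    let ?M = "PiM {..<n} (\<lambda>_. K)"
    have pK: "prob_space K" using K by (simp add: admissible_def)
    interpret M: prob_space ?M by (rule prob_space_PiM) (use pK in auto)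
    define \<mu> where "\<mu> k = (\<integral>y. g (h*real k) y \<partial>K)" for k
    define bad where "bad k = {S \<in> space ?M. \<epsilon>/8 \<le> \<bar>emp n (h*real k) S - \<mu> k\<bar>}" for k
    have tb: "h \<le> h * real k" "h * real k \<le> 1/h + h" if "k \<in> {1..N}" for k
    proof -
      show "h \<le> h * real k" using that h by simp
      have "h * real k \<le> h * real N" using that h by simp
      then show "h * real k \<le> 1/h + h" using NT2 by linarith
    qed
    have gm[measurable]: "g t \<in> borel_measurable K" for t by (rule g_meas[OF K])
    have [measurable]: "(\<lambda>S. emp n t S) \<in> borel_measurable ?M" for t
      unfolding emp_def by measurable
    have badm: "bad k \<in> sets ?M" for k unfolding bad_def by measurable
    have badp: "measure ?M (bad k) \<le> 2 * exp (-2 * real n * (\<epsilon>/8)\<^sup>2 / (2/h - 0)\<^sup>2)" if "k \<in> {1..N}" for k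
      unfolding bad_def emp_def \<mu>_def
      by (rule hoeff[OF K n0 h tb[OF that]]) (use e in simp)
    have L[measurable]: "Lsel h N n \<in> measurable ?M (count_space UNIV)"
      by (rule Lsel_meas) (rule gm)
    define P where "P k = (CR (h * real k) K \<le> ennreal (1 + \<epsilon>) * OPT K)" for k
    have Teq: "{S \<in> space ?M. CR (A S) K \<le> ennreal (1 + \<epsilon>) * OPT K} = {S \<in> space ?M. P (Lsel h N n S)}"
      by (simp add: A_def P_def)
    have Pm[measurable]: "P \<in> measurable (count_space UNIV) (count_space UNIV)" by simp
    have Tm: "{S \<in> space ?M. P (Lsel h N n S)} \<in> sets ?M" by measurable
    have sub: "space ?M - (\<Union>k\<in>{1..N}. bad k) \<subseteq> {S \<in> space ?M. P (Lsel h N n S)}"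
    proof
      fix S assume S: "S \<in> space ?M - (\<Union>k\<in>{1..N}. bad k)"
      have good: "\<bar>emp n (h*real k) S - \<mu> k\<bar> < \<epsilon>/8" if "k \<in> {1..N}" for k
      proof -
        have "S \<notin> bad k" "S \<in> space ?M" using S that by auto
        then have "\<not> (\<epsilon>/8 \<le> \<bar>emp n (h*real k) S - \<mu> k\<bar>)" unfolding bad_def by blast
        then show ?thesis by linarith
      qed
      define k0 where "k0 = Lsel h N n S"
      have k0: "k0 \<in> {1..N}" "\<forall>j\<in>{1..N}. emp n (h*real k0) S \<le> emp n (h*real j) S"
        using Lsel_prop[OF Nge, of h n S] by (auto simp: k0_def)
      have opt: "\<forall>j\<in>{1..N}. (\<integral>y. g (h*real k0) y \<partial>K) \<le> (\<integral>y. g (h*real j) y \<partial>K) + \<epsilon>/4"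
      proof
        fix j assume j: "j \<in> {1..N}"
        have "emp n (h * real k0) S \<le> emp n (h * real j) S" using k0(2) j by blast
        then have "\<mu> k0 \<le> \<mu> j + \<epsilon>/4" using good[OF j] good[OF k0(1)] by linarith
        then show "(\<integral>y. g (h*real k0) y \<partial>K) \<le> (\<integral>y. g (h*real j) y \<partial>K) + \<epsilon>/4"
          by (simp add: \<mu>_def)
      qed
      have "P k0" unfolding P_def
        by (rule det[OF K e h_def Nge NT1 NT2 k0(1) opt])
      then show "S \<in> {S \<in> space ?M. P (Lsel h N n S)}" using S by (simp add: k0_def)
    qed
    have Um: "(\<Union>k\<in>{1..N}. bad k) \<in> sets ?M" using badm by auto
    have "measure ?M (\<Union>k\<in>{1..N}. bad k) \<le> (\<Sum>k\<in>{1..N}. measure ?M (bad k))"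
      by (rule measure_UNION_le) (auto intro: badm)
    also have "\<dots> \<le> (\<Sum>k\<in>{1..N}. 2 * exp (-2 * real n * (\<epsilon>/8)\<^sup>2 / (2/h - 0)\<^sup>2))"
      by (rule sum_mono) (rule badp)
    also have "\<dots> = real N * (2 * exp (-2 * real n * (\<epsilon>/8)\<^sup>2 / (2/h - 0)\<^sup>2))" by simp
    also have "\<dots> \<le> 200 * exp (- (1/2048) * \<delta> / \<epsilon>) / \<epsilon>^2"
      by (rule numeric1[OF e d h_def N2 n2])
    finally have U: "measure ?M (\<Union>k\<in>{1..N}. bad k) \<le> 200 * exp (- (1/2048) * \<delta> / \<epsilon>) / \<epsilon>^2" .
    have "measure ?M (space ?M - (\<Union>k\<in>{1..N}. bad k)) = 1 - measure ?M (\<Union>k\<in>{1..N}. bad k)"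
      by (rule M.prob_compl[OF Um])
    moreover have "measure ?M (space ?M - (\<Union>k\<in>{1..N}. bad k)) \<le> measure ?M {S \<in> space ?M. P (Lsel h N n S)}"
      by (rule M.finite_measure_mono[OF sub Tm])
    ultimately show ?thesis using U Teq by simp
  qed
  show ?thesis
    by (rule exI[of _ n], rule exI[of _ A]) (use n1 Ameas Apos bound in auto)
qed

theorem mainTheorem2:
  shows "\<exists>C1>0. \<exists>C2>0. \<exists>c>0. \<forall>\<epsilon> \<delta>::real. 0 < \<epsilon> \<and> \<epsilon> \<le> 1/100 \<and> 0 < \<delta> \<longrightarrow>
    (\<exists>(n::nat) (A :: (nat \<Rightarrow> real) \<Rightarrow> real).
       real n \<le> C1 * \<delta> / \<epsilon> ^ 6 \<and>
       A \<in> borel_measurable (PiM {..<n} (\<lambda>_. borel)) \<and>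
       (\<forall>S. A S \<ge> 0) \<and>
       (\<forall>K. admissible K \<longrightarrow>
          measure (PiM {..<n} (\<lambda>_. K))
            {S \<in> space (PiM {..<n} (\<lambda>_. K)). CR (A S) K \<le> ennreal (1 + \<epsilon>) * OPT K}
          \<ge> 1 - C2 * exp (- c * \<delta> / \<epsilon>) / \<epsilon> ^ 2))"
  apply (rule exI[of _ 1], rule conjI, simp)
  apply (rule exI[of _ 200], rule conjI, simp)
  apply (rule exI[of _ "1/2048"], rule conjI, simp)
  apply (intro allI impI)
  apply (elim conjE)
  apply (rule main_fixed)
    apply assumption+
  done

end
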